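(* Let $d=4c_2-\alpha c_1$, $\ell=2c_2-\alpha c_1$, $x^*=\alpha/d$, $\hat x=\alpha/\ell$, $\delta^\sharp=\frac{d^2}{8c_2\ell+d^2}$. For every $\delta\in(0,1)$ there exists $\bar x\in(x^*,\hat x]$ such that the trigger strategy profile with cooperative level $\bar x$ is a subgame perfect equilibrium of $G^\infty(\delta)$; explicitly one may take $\bar x=\hat x$ if $\delta\ge\delta^\sharp$ and $\bar x=\frac{\alpha}{d}\cdot\frac{d^2-\delta\alpha^2c_1^2+32\delta c_2^2}{d^2-\delta\alpha^2c_1^2}$ if $\delta<\delta^\sharp$.
   Context: Fix real numbers $\alpha>0$, $c_1\in[0,\tfrac{2}{\alpha}]$ and $c_2\in[\tfrac32,2]$. The stage game $G$ (Partnership Game) has two players $i=1,2$; player $i$ chooses an effort level $x_i\in[0,\alpha]$, choices being simultaneous. Player $i$'s payoff is $$u_i(x_1,x_2)=\alpha\Big(\frac{x_1+x_2}{2}+c_1\frac{x_1x_2}{2}\Big)-c_2x_i^2 .$$ The Nash equilibrium effort of $G$ is $x^*=\frac{\alpha}{4c_2-\alpha c_1}$. For $\delta\in(0,1)$, $G^\infty(\delta)$ denotes the infinitely repeated game with perfect monitoring in which $G$ is played in periods $t=1,2,\dots$, each player observes all past action profiles, and player $i$'s payoff from a play $(a^t)_{t\ge1}$ is $\sum_{t\ge1}\delta^{t-1}u_i(a^t)$. For $\bar x\in[0,\alpha]$, the trigger strategy with cooperative level $\bar x$ is the strategy which, after history $h^t=(a^1,\dots,a^{t-1})$, plays $\bar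 x$ if $t=1$ or $a^s=(\bar x,\bar x)$ for all $s<t$, and plays $x^*$ otherwise. *)

theory Defs
  imports Complex_Main
begin

type_synonym profile = "real \<times> real"
type_synonym history = "profile list"
type_synonym strategy = "history \<Rightarrow> real"

definition u :: "real \<Rightarrow> real \<Rightarrow> real \<Rightarrow> nat \<Rightarrow> profile \<Rightarrow> real" where
  "u \<alpha> c1 c2 i a = \<alpha> * ((fst a + snd a) / 2 + c1 * (fst a * snd a) / 2)
      - c2 * (if i = 1 then fst a else snd a)^2"

definition is_strategy :: "real \<Rightarrow> strategy \<Rightarrow> bool" where
  "is_strategy \<alpha> s \<longleftrightarrow> (\<forall>h. s h \<in> {0..\<alpha>})"

definition is_history :: "real \<Rightarrow> history \<Rightarrow> bool" where
  "is_history \<alpha> h \<longleftrightarrow> (\<forall>a\<in>set h. fst a \<in> {0..\<alpha>} \<and> snd a \<in> {0..\<alpha>})"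

fun hist :: "strategy \<Rightarrow> strategy \<Rightarrow> history \<Rightarrow> nat \<Rightarrow> history" where
  "hist s1 s2 h 0 = h"
| "hist s1 s2 h (Suc n) = hist s1 s2 h n @ [(s1 (hist s1 s2 h n), s2 (hist s1 s2 h n))]"

definition play :: "strategy \<Rightarrow> strategy \<Rightarrow> history \<Rightarrow> nat \<Rightarrow> profile" where
  "play s1 s2 h n = (s1 (hist s1 s2 h n), s2 (hist s1 s2 h n))"

definition cont_payoff :: "real \<Rightarrow> real \<Rightarrow> real \<Rightarrow> real \<Rightarrow> nat \<Rightarrow> strategy \<Rightarrow> strategy \<Rightarrow> history \<Rightarrow> real" where
  "cont_payoff \<alpha> c1 c2 \<delta> i s1 s2 h = (\<Sum>n. \<delta>^n * u \<alpha> c1 c2 i (play s1 s2 h n))"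

definition is_SPE :: "real \<Rightarrow> real \<Rightarrow> real \<Rightarrow> real \<Rightarrow> strategy \<Rightarrow> strategy \<Rightarrow> bool" where
  "is_SPE \<alpha> c1 c2 \<delta> s1 s2 \<longleftrightarrow> is_strategy \<alpha> s1 \<and> is_strategy \<alpha> s2 \<and>
     (\<forall>h. is_history \<alpha> h \<longrightarrow>
        (\<forall>s'. is_strategy \<alpha> s' \<longrightarrow>
           cont_payoff \<alpha> c1 c2 \<delta> 1 s' s2 h \<le> cont_payoff \<alpha> c1 c2 \<delta> 1 s1 s2 h \<and>
           cont_payoff \<alpha> c1 c2 \<delta> 2 s1 s' h \<le> cont_payoff \<alpha> c1 c2 \<delta> 2 s1 s2 h))"

definition xstar :: "real \<Rightarrow> real \<Rightarrow> real \<Rightarrow> real" where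
  "xstar \<alpha> c1 c2 = \<alpha> / (4 * c2 - \<alpha> * c1)"

definition trigger :: "real \<Rightarrow> real \<Rightarrow> real \<Rightarrow> real \<Rightarrow> strategy" where
  "trigger \<alpha> c1 c2 xbar h = (if (\<forall>a\<in>set h. a = (xbar, xbar)) then xbar else xstar \<alpha> c1 c2)"

end

theory Submission imports Defs begin

lemma u2_swap: "u \<alpha> c1 c2 2 a = u \<alpha> c1 c2 1 (prod.swap a)"
  by (cases a) (simp add: u_def algebra_simps)

lemma hist_swap:
  "hist s1 s2 h n = map prod.swap (hist (\<lambda>g. s2 (map prod.swap g)) (\<lambda>g. s1 (map prod.swap g)) (map prod.swap h) n)"
  by (induction n) (simp_all add: comp_def)

lemma play_swap: "play s1 s2 h n = prod.swap (play (\<lambda>g. s2 (map prod.swap g)) (\<lambda>g. s1 (map prod.swap g)) (map prod.swap h) n)"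
  unfolding play_def using hist_swap[of s1 s2 h n] by simp

lemma cont_swap: "cont_payoff \<alpha> c1 c2 \<delta> 2 s1 s2 h = cont_payoff \<alpha> c1 c2 \<delta> 1 (\<lambda>g. s2 (map prod.swap g)) (\<lambda>g. s1 (map prod.swap g)) (map prod.swap h)"
  unfolding cont_payoff_def using play_swap[of s1 s2 h] by (simp add: u2_swap)

lemma trigger_swap: "trigger \<alpha> c1 c2 x (map prod.swap g) = trigger \<alpha> c1 c2 x g"
  unfolding trigger_def by (auto simp: prod.swap_def)

lemma u_bound:
  assumes "\<alpha> > 0" "c1 \<ge> 0" "c2 > 0" "a \<in> {0..\<alpha>}" "b \<in> {0..\<alpha>}"
  shows "\<bar>u \<alpha> c1 c2 1 (a,b)\<bar> \<le> \<alpha>*\<alpha> + \<alpha>*c1*(\<alpha>*\<alpha>)/2 + c2*\<alpha>^2"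
proof -
  have ab: "0 \<le> a" "a \<le> \<alpha>" "0 \<le> b" "b \<le> \<alpha>" using assms by auto
  have e: "u \<alpha> c1 c2 1 (a,b) = \<alpha>*(a+b)/2 + (\<alpha>*c1*(a*b))/2 - c2*a^2"
    by (simp add: u_def algebra_simps)
  have p0: "0 \<le> a*b" using ab by simp
  have p1: "a*b \<le> \<alpha>*\<alpha>" using ab by (simp add: mult_mono)
  have q0: "0 \<le> \<alpha>*c1*(a*b)" using p0 assms by simp
  have q1: "\<alpha>*c1*(a*b) \<le> \<alpha>*c1*(\<alpha>*\<alpha>)" using p1 assms by (simp add: mult_left_mono)
  have r0: "0 \<le> c2*a^2" using assms by simp
  have r1: "c2*a^2 \<le> c2*\<alpha>^2" using ab assms by (simp add: power_mono)
  have s0: "0 \<le> \<alpha>*(a+b)" using ab assms by simp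
  have s1: "\<alpha>*(a+b) \<le> 2*(\<alpha>*\<alpha>)" using ab assms
    by (metis add_mono distrib_left mult_2 mult_left_mono less_imp_le)
  show ?thesis unfolding e using q0 q1 r0 r1 s0 s1 by linarith
qed

lemma F1:
  assumes "c2 > 0" "xs * (4*c2 - \<alpha>*c1) = \<alpha>"
  shows "u \<alpha> c1 c2 1 (y,xs) \<le> u \<alpha> c1 c2 1 (xs,xs)"
proof -
  have "u \<alpha> c1 c2 1 (y,xs) - (u \<alpha> c1 c2 1 (xs,xs) - c2*(y-xs)^2) = (y-xs)*(\<alpha> + \<alpha>*c1*xs - 4*c2*xs)/2"
    by (simp add: u_def power2_eq_square field_simps)
  also have "\<alpha> + \<alpha>*c1*xs - 4*c2*xs = 0" using assms(2) by (simp add: algebra_simps)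
  finally show ?thesis using assms(1) by (simp add: ) 
qed

lemma F2:
  assumes "c2 > 0"
  shows "u \<alpha> c1 c2 1 (y,x) \<le> u \<alpha> c1 c2 1 (x,x) + c2*(x - \<alpha>*(1+c1*x)/(4*c2))^2"
proof -
  define \<beta> where "\<beta> = \<alpha>*(1+c1*x)/(4*c2)"
  have b: "4*c2*\<beta> = \<alpha>*(1+c1*x)" using assms by (simp add: \<beta>_def)
  have "u \<alpha> c1 c2 1 (y,x) - (u \<alpha> c1 c2 1 (x,x) + c2*(x - \<beta>)^2 - c2*(y-\<beta>)^2) = (y-x)*(\<alpha>*(1+c1*x) - 4*c2*\<beta>)/2"
    by (simp add: u_def power2_eq_square field_simps)
  also have "\<dots> = 0" using b by simp
  finally show ?thesis using assms unfolding \<beta>_def[symmetric]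
    by (smt (verit) mult_nonneg_nonneg zero_le_power2) 
qed


lemma player1:
  fixes \<alpha> c1 c2 \<delta> x xs :: real
  assumes a: "\<alpha> > 0" "c1 \<ge> 0" "c2 > 0" "0<\<delta>" "\<delta><1"
    and d: "xs * (4*c2 - \<alpha>*c1) = \<alpha>" and xsr: "0 \<le> xs" "xs \<le> \<alpha>" and xr: "0\<le>x" "x\<le>\<alpha>"
    and F3: "(1-\<delta>)*(c2*(x - \<alpha>*(1+c1*x)/(4*c2))^2) \<le> \<delta>*(u \<alpha> c1 c2 1 (x,x) - u \<alpha> c1 c2 1 (xs,xs))"
    and s': "is_strategy \<alpha> s'"
    and xsd: "xstar \<alpha> c1 c2 = xs"
  shows "cont_payoff \<alpha> c1 c2 \<delta> 1 s' (trigger \<alpha> c1 c2 x) h \<le> cont_payoff \<alpha> c1 c2 \<delta> 1 (trigger \<alpha> c1 c2 x) (trigger \<alpha> c1 c2 x) h"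
proof -
  define T where "T = trigger \<alpha> c1 c2 x"
  define v where "v = u \<alpha> c1 c2 1 (x,x)"
  define N where "N = u \<alpha> c1 c2 1 (xs,xs)"
  define D where "D = v + c2*(x - \<alpha>*(1+c1*x)/(4*c2))^2"
  define co where "co g \<longleftrightarrow> (\<forall>a\<in>set g. a = (x,x))" for g :: history
  define V where "V g = (if co g then v else N)/(1-\<delta>)" for g
  have Tg: "T g = (if co g then x else xs)" for g unfolding T_def trigger_def xsd co_def ..
  have Tstrat: "is_strategy \<alpha> T" unfolding is_strategy_def Tg using xsr xr by auto
  have dpos: "1 - \<delta> > 0" using a by simp
  have cancel: "w/(1-\<delta>) - \<delta>*(w/(1-\<delta>)) = w" for w
  proof -
    have "w/(1-\<delta>) - \<delta>*(w/(1-\<delta>)) = (1-\<delta>)*(w/(1-\<delta>))" by (simp add: left_diff_distrib diff_divide_distrib)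
    then show ?thesis using dpos by simp
  qed
  have DF: "D \<le> (v - \<delta>*N)/(1-\<delta>)"
    using F3 dpos unfolding D_def v_def N_def by (simp add: pos_le_divide_eq algebra_simps)
  have step: "u \<alpha> c1 c2 1 (play s T h n) \<le> V (hist s T h n) - \<delta> * V (hist s T h (Suc n))
     \<and> (s = T \<longrightarrow> u \<alpha> c1 c2 1 (play s T h n) = V (hist s T h n) - \<delta> * V (hist s T h (Suc n)))" for s n
  proof -
    define g where "g = hist s T h n"
    have hn: "hist s T h (Suc n) = g @ [(s g, T g)]" and pl: "play s T h n = (s g, T g)"
      by (simp_all add: g_def play_def)
    show ?thesis
    proof (cases "co g")
      case True
      then have Tx: "T g = x" by (simp add: Tg)
      show ?thesis
      proof (cases "s g = x")
        case True
        have "co (g @ [(s g, T g)])" using \<open>co g\<close> True Tx by (simp add: co_def)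
        then have "V (g @ [(s g, T g)]) = v/(1-\<delta>)" "V g = v/(1-\<delta>)" using \<open>co g\<close> by (simp_all add: V_def)
        moreover note cancel[of v]
        ultimately show ?thesis unfolding hn pl g_def[symmetric] using True Tx by (simp add: v_def)
      next
        case False
        have "\<not> co (g @ [(s g, T g)])" using False by (simp add: co_def)
        then have "V (g @ [(s g, T g)]) = N/(1-\<delta>)" "V g = v/(1-\<delta>)" using \<open>co g\<close> by (simp_all add: V_def)
        moreover have "v/(1-\<delta>) - \<delta>*(N/(1-\<delta>)) = (v - \<delta>*N)/(1-\<delta>)" by (simp add: diff_divide_distrib)
        moreover have "u \<alpha> c1 c2 1 (s g, x) \<le> D" unfolding D_def v_def using F2 a(3) by blast
        moreover have "s \<noteq> T" using False Tx by auto
        ultimately show ?thesis unfolding hn pl g_def[symmetric] using DF Tx by simp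
      qed
    next
      case False
      then have Tx: "T g = xs" by (simp add: Tg)
      have "\<not> co (g @ [(s g, T g)])" using False by (simp add: co_def)
      then have "V (g @ [(s g, T g)]) = N/(1-\<delta>)" "V g = N/(1-\<delta>)" using False by (simp_all add: V_def)
      moreover note cancel[of N]
      moreover have "u \<alpha> c1 c2 1 (s g, xs) \<le> N" unfolding N_def using F1 a(3) d by blast
      moreover have "s = T \<Longrightarrow> s g = xs" using Tx by simp
      ultimately show ?thesis unfolding hn pl g_def[symmetric] using Tx by (auto simp: N_def)
    qed
  qed
  define M where "M = \<alpha>*\<alpha> + \<alpha>*c1*(\<alpha>*\<alpha>)/2 + c2*\<alpha>^2"
  have summ: "summable (\<lambda>n. \<delta>^n * u \<alpha> c1 c2 1 (play s T h n))" if "is_strategy \<alpha> s" for s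
  proof (rule summable_comparison_test')
    show "summable (\<lambda>n. \<delta>^n * M)" using a by (simp add: summable_mult2)
    fix n
    have "fst (play s T h n) \<in> {0..\<alpha>}" "snd (play s T h n) \<in> {0..\<alpha>}"
      using that Tstrat unfolding play_def is_strategy_def by auto
    then have "\<bar>u \<alpha> c1 c2 1 (play s T h n)\<bar> \<le> M" unfolding M_def
      using u_bound[OF a(1,2,3)] by (metis prod.collapse)
    then show "norm (\<delta>^n * u \<alpha> c1 c2 1 (play s T h n)) \<le> \<delta>^n * M"
      using a by (simp add: abs_mult mult_left_mono)
  qed
  have tele: "(\<lambda>n. \<delta>^n * V (hist s T h n) - \<delta>^(Suc n) * V (hist s T h (Suc n))) sums V h" for s
  proof -
    define f where "f n = \<delta>^n * V (hist s T h n)" for n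
    have "f \<longlonglongrightarrow> 0"
    proof (rule tendsto_0_le[where K=1])
      have C: "0 \<le> (\<bar>v\<bar> + \<bar>N\<bar>)/(1-\<delta>)" using dpos by simp
      show "\<forall>\<^sub>F n in sequentially. norm (f n) \<le> norm (\<delta>^n * ((\<bar>v\<bar> + \<bar>N\<bar>)/(1-\<delta>))) * 1"
      proof (intro always_eventually allI)
        fix n
        have Vb: "\<bar>V g\<bar> \<le> (\<bar>v\<bar> + \<bar>N\<bar>)/(1-\<delta>)" for g
          using dpos by (auto simp: V_def divide_right_mono)
        show "norm (f n) \<le> norm (\<delta>^n * ((\<bar>v\<bar> + \<bar>N\<bar>)/(1-\<delta>))) * 1"
          using a C mult_left_mono[OF Vb[of "hist s T h n"], of "\<delta>^n"] by (simp add: f_def abs_mult)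
      qed
      show "(\<lambda>n. \<delta>^n * ((\<bar>v\<bar> + \<bar>N\<bar>)/(1-\<delta>))) \<longlonglongrightarrow> 0"
        using a by (intro tendsto_mult_left_zero LIMSEQ_power_zero) auto
    qed
    from telescope_sums'[OF this] show ?thesis by (simp add: f_def)
  qed
  have le: "\<delta>^n * u \<alpha> c1 c2 1 (play s T h n) \<le> \<delta>^n * V (hist s T h n) - \<delta>^(Suc n) * V (hist s T h (Suc n))" for s n
  proof -
    have "\<delta>^n * u \<alpha> c1 c2 1 (play s T h n) \<le> \<delta>^n * (V (hist s T h n) - \<delta> * V (hist s T h (Suc n)))"
      using step[of s n] a by (intro mult_left_mono) auto
    then show ?thesis by (simp add: algebra_simps)
  qed
  have eqT: "\<delta>^n * u \<alpha> c1 c2 1 (play T T h n) = \<delta>^n * V (hist T T h n) - \<delta>^(Suc n) * V (hist T T h (Suc n))" for n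
  proof -
    have "u \<alpha> c1 c2 1 (play T T h n) = V (hist T T h n) - \<delta> * V (hist T T h (Suc n))" using step[of T n] by blast
    then show ?thesis by (simp only: power_Suc) (simp add: algebra_simps)
  qed
  have "cont_payoff \<alpha> c1 c2 \<delta> 1 s' T h \<le> V h"
    unfolding cont_payoff_def
    using suminf_le[OF le summ[OF s'] sums_summable[OF tele]] sums_unique[OF tele] by simp
  moreover have "cont_payoff \<alpha> c1 c2 \<delta> 1 T T h = V h"
    unfolding cont_payoff_def eqT using sums_unique[OF tele] by simp
  ultimately show ?thesis unfolding T_def by simp
qed


lemma spe_trigger:
  fixes \<alpha> c1 c2 \<delta> x xs :: real
  assumes a: "\<alpha> > 0" "c1 \<ge> 0" "c2 > 0" "0<\<delta>" "\<delta><1"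
    and d: "xs * (4*c2 - \<alpha>*c1) = \<alpha>" and xsr: "0 \<le> xs" "xs \<le> \<alpha>" and xr: "0\<le>x" "x\<le>\<alpha>"
    and F3: "(1-\<delta>)*(c2*(x - \<alpha>*(1+c1*x)/(4*c2))^2) \<le> \<delta>*(u \<alpha> c1 c2 1 (x,x) - u \<alpha> c1 c2 1 (xs,xs))"
    and xsd: "xstar \<alpha> c1 c2 = xs"
  shows "is_SPE \<alpha> c1 c2 \<delta> (trigger \<alpha> c1 c2 x) (trigger \<alpha> c1 c2 x)"
proof -
  define T where "T = trigger \<alpha> c1 c2 x"
  have Ts: "is_strategy \<alpha> T" unfolding is_strategy_def T_def trigger_def xsd using xsr xr by auto
  have sw: "(\<lambda>g. T (map prod.swap g)) = T" unfolding T_def by (simp add: trigger_swap)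
  have "cont_payoff \<alpha> c1 c2 \<delta> 1 s' T h \<le> cont_payoff \<alpha> c1 c2 \<delta> 1 T T h
      \<and> cont_payoff \<alpha> c1 c2 \<delta> 2 T s' h \<le> cont_payoff \<alpha> c1 c2 \<delta> 2 T T h"
    if s': "is_strategy \<alpha> s'" for s' h
  proof
    show "cont_payoff \<alpha> c1 c2 \<delta> 1 s' T h \<le> cont_payoff \<alpha> c1 c2 \<delta> 1 T T h"
      unfolding T_def by (rule player1[OF a d xsr xr F3 s' xsd])
    have s'': "is_strategy \<alpha> (\<lambda>g. s' (map prod.swap g))" using s' by (simp add: is_strategy_def)
    show "cont_payoff \<alpha> c1 c2 \<delta> 2 T s' h \<le> cont_payoff \<alpha> c1 c2 \<delta> 2 T T h"
      unfolding cont_swap sw unfolding T_def by (rule player1[OF a d xsr xr F3 s'' xsd])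
  qed
  then show ?thesis unfolding is_SPE_def T_def[symmetric] using Ts by blast
qed

lemma F3_from_t:
  fixes \<alpha> c1 c2 \<delta> x xs t d l :: real
  assumes c2: "c2 > 0" and dd: "d = 4*c2 - \<alpha>*c1" and ll: "l = 2*c2 - \<alpha>*c1"
    and xsd: "xs*d = \<alpha>" and xt: "x = xs + t" and t0: "t \<ge> 0" and "0 \<le> \<delta>"
    and H: "t*((1-\<delta>)*d^2 + 8*\<delta>*c2*l) \<le> 32*\<delta>*c2^2*xs"
  shows "(1-\<delta>)*(c2*(x - \<alpha>*(1+c1*x)/(4*c2))^2) \<le> \<delta>*(u \<alpha> c1 c2 1 (x,x) - u \<alpha> c1 c2 1 (xs,xs))"
proof -
  have e1: "x - \<alpha>*(1+c1*x)/(4*c2) = d*t/(4*c2)"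
    using c2 xsd unfolding xt dd by (simp add: field_simps)
  have e2: "u \<alpha> c1 c2 1 (x,x) - u \<alpha> c1 c2 1 (xs,xs) = t*(2*c2*xs - l*t/2)"
    using xsd unfolding xt dd ll u_def by (simp add: field_simps power2_eq_square) (drule arg_cong[where f="\<lambda>z. 8*t*z"], simp add: algebra_simps)
  have H2: "t*(t*((1-\<delta>)*d^2 + 8*\<delta>*c2*l)) \<le> t*(32*\<delta>*c2^2*xs)"
    using H t0 by (rule mult_left_mono)
  have L: "(1-\<delta>)*(c2*(d*t/(4*c2))^2) = (t*(t*((1-\<delta>)*d^2)))/(16*c2)"
    using c2 by (simp add: field_simps power2_eq_square)
  have R: "\<delta>*(t*(2*c2*xs - l*t/2)) = (t*(32*\<delta>*c2^2*xs) - t*(t*(8*\<delta>*c2*l)))/(16*c2)"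
    using c2 by (simp add: field_simps power2_eq_square)
  have "(t*(t*((1-\<delta>)*d^2)))/(16*c2) \<le> (t*(32*\<delta>*c2^2*xs) - t*(t*(8*\<delta>*c2*l)))/(16*c2)"
    using H2 c2 by (intro divide_right_mono) (simp_all add: algebra_simps)
  then show ?thesis unfolding e1 e2 L R .
qed


theorem corollary2:
  fixes \<alpha> c1 c2 \<delta> :: real
  assumes "\<alpha> > 0" and "0 \<le> c1" and "c1 \<le> 2 / \<alpha>" and "3/2 \<le> c2" and "c2 \<le> 2"
    and "0 < \<delta>" and "\<delta> < 1"
  shows "let d = 4 * c2 - \<alpha> * c1; l = 2 * c2 - \<alpha> * c1;
             xs = \<alpha> / d; xh = \<alpha> / l;
             \<delta>s = d^2 / (8 * c2 * l + d^2);
             xb = (if \<delta> \<ge> \<delta>s then xh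
                   else (\<alpha> / d) * ((d^2 - \<delta> * \<alpha>^2 * c1^2 + 32 * \<delta> * c2^2)
                                    / (d^2 - \<delta> * \<alpha>^2 * c1^2)))
         in (\<exists>x \<in> {xs<..xh}. is_SPE \<alpha> c1 c2 \<delta> (trigger \<alpha> c1 c2 x) (trigger \<alpha> c1 c2 x))
            \<and> xb \<in> {xs<..xh}
            \<and> is_SPE \<alpha> c1 c2 \<delta> (trigger \<alpha> c1 c2 xb) (trigger \<alpha> c1 c2 xb)"
proof -
  define d where "d = 4 * c2 - \<alpha> * c1"
  define l where "l = 2 * c2 - \<alpha> * c1"
  define xs where "xs = \<alpha> / d"
  define xh where "xh = \<alpha> / l"
  define \<delta>s where "\<delta>s = d^2 / (8 * c2 * l + d^2)"
  define E where "E = d^2 - \<delta> * \<alpha>^2 * c1^2"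
  define xb where "xb = (if \<delta> \<ge> \<delta>s then xh else (\<alpha> / d) * ((E + 32 * \<delta> * c2^2) / E))"
  have a0: "\<alpha> > 0" "c1 \<ge> 0" "c2 > 0" "0 < \<delta>" "\<delta> < 1" using assms by auto
  have ac0: "0 \<le> \<alpha>*c1" using assms by simp
  have ac2: "\<alpha>*c1 \<le> 2" using assms by (simp add: le_divide_eq mult.commute)
  have d4: "d \<ge> 4" and l1: "l \<ge> 1" and dl: "d = l + 2*c2" using assms ac2 unfolding d_def l_def by auto
  have xsd: "xs * d = \<alpha>" using d4 unfolding xs_def by simp
  have xsd': "xs * (4*c2 - \<alpha>*c1) = \<alpha>" using xsd unfolding d_def .
  have xspos: "xs > 0" unfolding xs_def using a0 d4 by simp
  have xsle: "xs \<le> \<alpha>" unfolding xs_def using a0 d4 by (simp add: divide_le_eq)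
  have xhle: "xh \<le> \<alpha>" unfolding xh_def using a0 l1 by (simp add: divide_le_eq)
  have xh_eq: "xh = xs + 2*c2*xs/l" unfolding xh_def using l1
    by (simp add: xsd[symmetric] dl field_simps)
  have gap: "2*c2*xs/l > 0" using a0 xspos l1 by simp
  have Eid: "E = (1-\<delta>)*d^2 + 8*\<delta>*c2*l"
    unfolding E_def d_def l_def by (simp add: power2_eq_square algebra_simps)
  have Epos: "E > 0" unfolding Eid using a0 l1 d4
    by (intro add_pos_nonneg) (simp_all)
  have xstar: "xstar \<alpha> c1 c2 = xs" unfolding xstar_def xs_def d_def ..
  have dsl: "8*c2*l + d^2 > 0" using a0 l1 by (simp add: add_pos_nonneg)
  have main: "xb \<in> {xs<..xh} \<and> (\<exists>t. xb = xs + t \<and> t \<ge> 0 \<and> t*((1-\<delta>)*d^2 + 8*\<delta>*c2*l) \<le> 32*\<delta>*c2^2*xs)"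
  proof (cases "\<delta> \<ge> \<delta>s")
    case True
    then have "d^2 \<le> \<delta>*(8*c2*l + d^2)" unfolding \<delta>s_def using dsl by (simp add: divide_le_eq)
    then have Ele: "E \<le> 16*\<delta>*c2*l" unfolding Eid by (simp add: algebra_simps)
    have "(2*c2*xs/l)*E \<le> (2*c2*xs/l)*(16*\<delta>*c2*l)"
      using Ele gap by (intro mult_left_mono) auto
    also have "\<dots> = 32*\<delta>*c2^2*xs" using l1 by (simp add: power2_eq_square)
    finally have "(2*c2*xs/l)*E \<le> 32*\<delta>*c2^2*xs" .
    then show ?thesis using True gap xh_eq unfolding xb_def Eid by auto
  next
    case False
    define t where "t = 32*\<delta>*c2^2*xs/E"
    have xbt: "xb = xs + t" unfolding xb_def t_def using False Epos d4
      by (simp add: xs_def field_simps)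
    have tpos: "t > 0" unfolding t_def using a0 xspos Epos by simp
    have tE: "t*E = 32*\<delta>*c2^2*xs" unfolding t_def using Epos by simp
    from False have "\<delta>*(8*c2*l + d^2) < d^2" unfolding \<delta>s_def using dsl by (simp add: not_le less_divide_eq mult.commute)
    then have Ege: "16*\<delta>*c2*l < E" unfolding Eid by (simp add: algebra_simps)
    have "t \<le> 2*c2*xs/l"
    proof -
      have "32*\<delta>*c2^2*xs*l \<le> 2*c2*xs*E"
      proof -
        have "2*c2*xs*(16*\<delta>*c2*l) \<le> 2*c2*xs*E" using Ege a0 xspos by (intro mult_left_mono) auto
        then show ?thesis by (simp add: power2_eq_square algebra_simps)
      qed
      then show ?thesis unfolding t_def using Epos l1 by (simp add: field_simps)
    qed
    then show ?thesis using xbt tpos tE xh_eq unfolding Eid by auto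
  qed
  then obtain t where t: "xb = xs + t" "t \<ge> 0" "t*((1-\<delta>)*d^2 + 8*\<delta>*c2*l) \<le> 32*\<delta>*c2^2*xs" by blast
  have F3: "(1-\<delta>)*(c2*(xb - \<alpha>*(1+c1*xb)/(4*c2))^2) \<le> \<delta>*(u \<alpha> c1 c2 1 (xb,xb) - u \<alpha> c1 c2 1 (xs,xs))"
    using F3_from_t[OF a0(3) d_def l_def xsd t(1,2) _ t(3)] a0 by simp
  have xbr: "0 \<le> xb" "xb \<le> \<alpha>" using main xspos xhle by auto
  have spe: "is_SPE \<alpha> c1 c2 \<delta> (trigger \<alpha> c1 c2 xb) (trigger \<alpha> c1 c2 xb)"
    using spe_trigger[OF a0 xsd' _ xsle xbr F3 xstar] xspos by simp
  have "(\<exists>x \<in> {xs<..xh}. is_SPE \<alpha> c1 c2 \<delta> (trigger \<alpha> c1 c2 x) (trigger \<alpha> c1 c2 x))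
            \<and> xb \<in> {xs<..xh} \<and> is_SPE \<alpha> c1 c2 \<delta> (trigger \<alpha> c1 c2 xb) (trigger \<alpha> c1 c2 xb)"
    using main spe by blast
  then show ?thesis unfolding Let_def xb_def E_def \<delta>s_def xh_def xs_def l_def d_def .
qed

end
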